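(* Let $P\in\mathbb{R}_+^{n\times n}$ be a sub-stochastic out-connected matrix and $w\in\mathbb{R}^n_+$. Then for every $c\in\mathbb{R}^n$ the equation $x=S_0^w(P'x+c)$ has a unique solution $x\in\mathbb{R}^n$.
   Context: $P$ sub-stochastic: nonnegative with $P\mathbbm{1}\le\mathbbm{1}$. The graph $\mathcal G_P$ has node set $\{1,\dots,n\}$ and a directed link $(i,j)$ whenever $P_{ij}>0$. Let $\mathcal O=\{i:\,\sum_jP_{ij}<1\}$. $P$ is out-connected if $\mathcal O$ is nonempty and from every node of $\mathcal G_P$ there is a directed path to some node in $\mathcal O$. $(S_0^w(x))_i=\min\{\max\{x_i,0\},w_i\}$; $P'$ is the transpose. *)

theory Defs
  imports "HOL-Analysis.Analysis"
begin

definition nonneg_mat :: "real^'n^'n \<Rightarrow> bool" where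
  "nonneg_mat P \<longleftrightarrow> (\<forall>i j. P $ i $ j \<ge> 0)"

definition substochastic :: "real^'n^'n::finite \<Rightarrow> bool" where
  "substochastic P \<longleftrightarrow> nonneg_mat P \<and> (\<forall>i. (\<Sum>j\<in>UNIV. P $ i $ j) \<le> 1)"

definition graph_edges :: "real^'n^'n \<Rightarrow> ('n \<times> 'n) set" where
  "graph_edges P = {(i, j). P $ i $ j > 0}"

definition deficient_nodes :: "real^'n^'n::finite \<Rightarrow> 'n set" where
  "deficient_nodes P = {i. (\<Sum>j\<in>UNIV. P $ i $ j) < 1}"

definition out_connected :: "real^'n^'n::finite \<Rightarrow> bool" where
  "out_connected P \<longleftrightarrow> deficient_nodes P \<noteq> {} \<and>
     (\<forall>i. \<exists>k\<in>deficient_nodes P. (i, k) \<in> (graph_edges P)\<^sup>*)"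

definition sat :: "real^'n \<Rightarrow> real^'n \<Rightarrow> real^'n" where
  "sat w x = (\<chi> i. min (max (x $ i) 0) (w $ i))"

end

theory Submission
  imports Defs
begin

lemma tp_comp: "(transpose P *v x) $ i = (\<Sum>j\<in>UNIV. P $ j $ i * x $ j)"
  by (simp add: matrix_vector_mult_def transpose_def)

lemma sat_lip: "\<bar>sat w a $ i - sat w b $ i\<bar> \<le> \<bar>a $ i - b $ i\<bar>"
  unfolding sat_def by auto

lemma existence:
  fixes P :: "real^'n^'n::finite" and w c :: "real^'n"
  assumes "\<forall>i. w $ i \<ge> 0"
  shows "\<exists>x :: real^'n. x = sat w (transpose P *v x + c)"
proof -
  let ?S = "cbox (0::real^'n) w"
  let ?f = "\<lambda>x. sat w (transpose P *v x + c)"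
  have "0 \<in> ?S" using assms by (simp add: mem_box_cart)
  then have ne: "?S \<noteq> {}" by blast
  have cont: "continuous_on ?S ?f"
    unfolding sat_def tp_comp
    by (intro continuous_intros)
  have fim: "?f \<in> ?S \<rightarrow> ?S" using assms by (auto simp: mem_box_cart sat_def)
  obtain x where "x \<in> ?S" "?f x = x"
    using brouwer[OF compact_cbox convex_box(1) ne cont fim] by blast
  then show ?thesis by metis
qed

theorem proposition3:
  fixes P :: "real^'n^'n::finite" and w c :: "real^'n"
  assumes "substochastic P" and "out_connected P"
    and "\<forall>i. w $ i \<ge> 0"
  shows "\<exists>!x :: real^'n. x = sat w (transpose P *v x + c)"
proof -
  have nn: "\<And>i j. P $ i $ j \<ge> 0" and rs: "\<And>i. (\<Sum>j\<in>UNIV. P $ i $ j) \<le> 1"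
    using assms(1) by (auto simp: substochastic_def nonneg_mat_def)
  have uniq: "x = y" if hx: "x = sat w (transpose P *v x + c)"
      and hy: "y = sat w (transpose P *v y + c)" for x y
  proof -
    define d where "d = (\<lambda>i. \<bar>x $ i - y $ i\<bar>)"
    have dnn: "\<And>i. d i \<ge> 0" by (simp add: d_def)
    have le: "d i \<le> (\<Sum>j\<in>UNIV. P $ j $ i * d j)" for i
    proof -
      have "d i \<le> \<bar>(transpose P *v x + c) $ i - (transpose P *v y + c) $ i\<bar>"
        unfolding d_def using sat_lip[of w "transpose P *v x + c" i "transpose P *v y + c"]
        hx hy by metis
      also have "\<dots> = \<bar>\<Sum>j\<in>UNIV. P $ j $ i * (x $ j - y $ j)\<bar>"
        unfolding vector_add_component tp_comp by (simp add: sum_subtractf algebra_simps)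
      also have "\<dots> \<le> (\<Sum>j\<in>UNIV. \<bar>P $ j $ i * (x $ j - y $ j)\<bar>)"
        by (rule sum_abs)
      also have "\<dots> = (\<Sum>j\<in>UNIV. P $ j $ i * d j)"
        using nn by (simp add: d_def abs_mult)
      finally show ?thesis .
    qed
    define r where "r = (\<lambda>j. (\<Sum>i\<in>UNIV. P $ j $ i))"
    have swap: "(\<Sum>i\<in>UNIV. \<Sum>j\<in>UNIV. P $ j $ i * d j) = (\<Sum>j\<in>UNIV. r j * d j)"
      unfolding r_def sum_distrib_right by (rule sum.swap)
    have A: "(\<Sum>i\<in>UNIV. (\<Sum>j\<in>UNIV. P $ j $ i * d j) - d i) = (\<Sum>j\<in>UNIV. (r j - 1) * d j)"
      unfolding sum_subtractf swap by (simp add: sum_subtractf left_diff_distrib)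
    have Bnn: "\<And>j. (r j - 1) * d j \<le> 0"
      using rs dnn unfolding r_def by (simp add: mult_nonpos_nonneg)
    have "(\<Sum>j\<in>UNIV. (r j - 1) * d j) \<le> 0" using Bnn by (simp add: sum_nonpos)
    moreover have "(\<Sum>i\<in>UNIV. (\<Sum>j\<in>UNIV. P $ j $ i * d j) - d i) \<ge> 0"
      using le by (simp add: sum_nonneg)
    ultimately have s0: "(\<Sum>i\<in>UNIV. (\<Sum>j\<in>UNIV. P $ j $ i * d j) - d i) = 0"
      and s1: "(\<Sum>j\<in>UNIV. (r j - 1) * d j) = 0" using A by linarith+
    have eq: "d i = (\<Sum>j\<in>UNIV. P $ j $ i * d j)" for i
      using s0 le sum_nonneg_eq_0_iff[of UNIV "\<lambda>i. (\<Sum>j\<in>UNIV. P $ j $ i * d j) - d i"]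
      by (simp add: diff_ge_0_iff_ge)
    have z: "(r j - 1) * d j = 0" for j
    proof -
      have "(\<Sum>j\<in>UNIV. - ((r j - 1) * d j)) = 0" using s1 by (simp add: sum_negf)
      moreover have "\<And>j. - ((r j - 1) * d j) \<ge> 0" using Bnn by simp
      ultimately show ?thesis using sum_nonneg_eq_0_iff[of UNIV "\<lambda>j. - ((r j - 1) * d j)"] by simp
    qed
    have dO: "d k = 0" if "k \<in> deficient_nodes P" for k
      using z[of k] that unfolding deficient_nodes_def r_def by auto
    have bk: "d i = 0" if "P $ i $ j > 0" "d j = 0" for i j
    proof -
      have "P $ i $ j * d i \<le> (\<Sum>l\<in>UNIV. P $ l $ j * d l)"
        by (rule member_le_sum[where f="\<lambda>l. P $ l $ j * d l"]) (auto intro: mult_nonneg_nonneg nn dnn)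
      then have "P $ i $ j * d i \<le> 0" using eq[of j] that by simp
      then show ?thesis using that dnn[of i]
        by (metis mult_le_0_iff order.order_iff_strict linorder_not_le order.antisym)
    qed
    have path: "(i, k) \<in> (graph_edges P)\<^sup>* \<Longrightarrow> d k = 0 \<Longrightarrow> d i = 0" for i k
    proof (induction rule: converse_rtrancl_induct)
      case base then show ?case by simp
    next
      case (step a b) then show ?case using bk by (auto simp: graph_edges_def)
    qed
    have "d i = 0" for i
      using assms(2) dO path unfolding out_connected_def by blast
    then show ?thesis by (simp add: d_def vec_eq_iff)
  qed
  show ?thesis using existence[OF assms(3), of P c] uniq by blast
qed

end
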